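(* Let $M$ be a graded $R$-module. The natural map $\varphi=\phi^R\circ\psi^q$ is continuous with respect to the quasi-Zariski topology on $qp.Spec_g(M)$ and the Zariski topology on $Spec_g(\overline R)$; more precisely, for every graded ideal $I$ of $R$ containing $\mathrm{Ann}(M)$, $$\varphi^{-1}(V_{\overline R}^g(\overline I))=(\phi^R\circ\psi^q)^{-1}(V_{\overline R}^g(\overline I))=(\psi^q)^{-1}(qp\text{-}V_{\overline R}^g(\overline I))=qp\text{-}V_M^g(IM).$$
   Context: $R=\bigoplus_{g\in G}R_g$ is a graded commutative ring with identity graded by a group $G$, $h(R)=\bigcup_g R_g$; $M$ is a graded $R$-module, $h(M)$ its homogeneous elements. $Gr(I)$ is the graded radical of a graded ideal $I$. $Spec_g(R)$: graded prime ideals. $(K:_RM)=\{r: rM\subseteq K\}$. Graded prime submodule: proper graded $P$ with $rm\in P$ ($r\in h(R), m\in h(M)$) implying $m\in P$ or $r\in(P:_RM)$. $Gr_M(K)$: intersection of graded prime submodules containing $K$ ($M$ if none). Graded primeful property of $K$: for each graded prime $p\supseteq(K:_RM)$ there is a graded prime submodule $P\supseteq K$ with $(P:_RM)=p$. Graded quasi-primary submodule: proper graded $Q$ with $rm\in Q$ ($r\in h(R),m\in h(M)$) implying $r\in Gr((Q:_RM))$ or $m\in Gr_M(Q)$. $qp.Spec_g(M)$: graded quasi-primary submodules with the graded primeful property. $qp\text{-}V_M^g(K)=\{Q\in qp.Spec_g(M): Gr((Q:_RM))\supseteq Gr((K:_RM))\}$; the quasi-Zariski topology on $qp.Spec_g(M)$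 has closed sets exactly the $qp\text{-}V_M^g(K)$. $\overline R=R/\mathrm{Ann}(M)$, $\overline I=I/\mathrm{Ann}(M)$. $Spec_g(\overline R)$ has the Zariski topology with closed sets $V_{\overline R}^g(\overline I)=\{\overline p\in Spec_g(\overline R):\overline I\subseteq\overline p\}$. A graded quasi-primary ideal of a graded ring is a proper graded ideal $q$ such that $ab\in q$ with $a,b$ homogeneous implies $a\in Gr(q)$ or $b\in Gr(q)$; $qp.Spec_g(\overline R)$ is the set of these in $\overline R$. $\psi^q:qp.Spec_g(M)\to qp.Spec_g(\overline R)$, $\psi^q(Q)=\overline{(Q:_RM)}$; $\phi^R:qp.Spec_g(\overline R)\to Spec_g(\overline R)$, $\phi^R(\overline q)=\overline{Gr(q)}$; $qp\text{-}V_{\overline R}^g(\overline I)=(\phi^R)^{-1}(V_{\overline R}^g(\overline I))$, i.e. the set of $\overline q\in qp.Spec_g(\overline R)$ with $Gr(q)\supseteq I$. The natural map is $\varphi(Q)=\overline{(Gr_M(Q):_RM)}=\overline{Gr((Q:_RM))}$. *)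

theory Defs
  imports Main "HOL.Modules"
begin

(* Conventions: the graded ring R is the whole type 'r (a comm_ring_1), the graded
   module M is the whole type 'm, with action scale; G is the type 'g (a group, written
   additively, not necessarily abelian). *)

definition dsum_decomp :: "('g \<Rightarrow> 'a::ab_group_add set) \<Rightarrow> 'a \<Rightarrow> ('g \<Rightarrow> 'a) \<Rightarrow> bool" where
  "dsum_decomp A x c \<longleftrightarrow> finite {g. c g \<noteq> 0} \<and> (\<forall>g. c g \<in> A g) \<and> x = (\<Sum>g\<in>{g. c g \<noteq> 0}. c g)"

definition additive_subgroup :: "'a::ab_group_add set \<Rightarrow> bool" where
  "additive_subgroup S \<longleftrightarrow> 0 \<in> S \<and> (\<forall>x\<in>S. \<forall>y\<in>S. x + y \<in> S) \<and> (\<forall>x\<in>S. - x \<in> S)"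

definition internal_dsum :: "('g \<Rightarrow> 'a::ab_group_add set) \<Rightarrow> bool" where
  "internal_dsum A \<longleftrightarrow> (\<forall>g. additive_subgroup (A g)) \<and> (\<forall>x. \<exists>!c. dsum_decomp A x c)"

definition comp :: "('g \<Rightarrow> 'a::ab_group_add set) \<Rightarrow> 'a \<Rightarrow> 'g \<Rightarrow> 'a" where
  "comp A x = (THE c. dsum_decomp A x c)"

definition hom :: "('g \<Rightarrow> 'a set) \<Rightarrow> 'a set" where
  "hom A = (\<Union>g. A g)"

definition graded_ring :: "('g::group_add \<Rightarrow> 'r::comm_ring_1 set) \<Rightarrow> bool" where
  "graded_ring RG \<longleftrightarrow> internal_dsum RG \<and>
     (\<forall>g h. \<forall>a\<in>RG g. \<forall>b\<in>RG h. a * b \<in> RG (g + h))"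

definition graded_module ::
  "('g::group_add \<Rightarrow> 'r::comm_ring_1 set) \<Rightarrow> ('g \<Rightarrow> 'm::ab_group_add set) \<Rightarrow> ('r \<Rightarrow> 'm \<Rightarrow> 'm) \<Rightarrow> bool" where
  "graded_module RG MG scale \<longleftrightarrow> graded_ring RG \<and> module scale \<and> internal_dsum MG \<and>
     (\<forall>g h. \<forall>a\<in>RG g. \<forall>m\<in>MG h. scale a m \<in> MG (g + h))"

definition is_ideal :: "'r::comm_ring_1 set \<Rightarrow> bool" where
  "is_ideal I \<longleftrightarrow> 0 \<in> I \<and> (\<forall>x\<in>I. \<forall>y\<in>I. x + y \<in> I) \<and> (\<forall>r. \<forall>x\<in>I. r * x \<in> I)"

definition graded_ideal :: "('g \<Rightarrow> 'r::comm_ring_1 set) \<Rightarrow> 'r set \<Rightarrow> bool" where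
  "graded_ideal RG I \<longleftrightarrow> is_ideal I \<and> (\<forall>x\<in>I. \<forall>g. comp RG x g \<in> I)"

definition is_submodule :: "('r::comm_ring_1 \<Rightarrow> 'm::ab_group_add \<Rightarrow> 'm) \<Rightarrow> 'm set \<Rightarrow> bool" where
  "is_submodule scale N \<longleftrightarrow> 0 \<in> N \<and> (\<forall>x\<in>N. \<forall>y\<in>N. x + y \<in> N) \<and> (\<forall>r. \<forall>x\<in>N. scale r x \<in> N)"

definition graded_submodule :: "('g \<Rightarrow> 'm::ab_group_add set) \<Rightarrow> ('r::comm_ring_1 \<Rightarrow> 'm \<Rightarrow> 'm) \<Rightarrow> 'm set \<Rightarrow> bool" where
  "graded_submodule MG scale N \<longleftrightarrow> is_submodule scale N \<and> (\<forall>x\<in>N. \<forall>g. comp MG x g \<in> N)"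

definition colon :: "('r \<Rightarrow> 'm \<Rightarrow> 'm) \<Rightarrow> 'm set \<Rightarrow> 'r set" where
  "colon scale K = {r. \<forall>m. scale r m \<in> K}"

definition Ann :: "('r \<Rightarrow> 'm::zero \<Rightarrow> 'm) \<Rightarrow> 'r set" where
  "Ann scale = colon scale {0}"

definition ideal_times_module :: "('r \<Rightarrow> 'm::ab_group_add \<Rightarrow> 'm) \<Rightarrow> 'r set \<Rightarrow> 'm set" where
  "ideal_times_module scale I =
     {x. \<exists>xs. set (map fst xs) \<subseteq> I \<and> x = (\<Sum>(r, m)\<leftarrow>xs. scale r m)}"

definition Gr :: "('g \<Rightarrow> 'r::comm_ring_1 set) \<Rightarrow> 'r set \<Rightarrow> 'r set" where
  "Gr RG I = {r. \<forall>g. \<exists>n::nat. (comp RG r g) ^ n \<in> I}"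

definition graded_prime_ideal :: "('g \<Rightarrow> 'r::comm_ring_1 set) \<Rightarrow> 'r set \<Rightarrow> bool" where
  "graded_prime_ideal RG p \<longleftrightarrow> graded_ideal RG p \<and> p \<noteq> UNIV \<and>
     (\<forall>a\<in>hom RG. \<forall>b\<in>hom RG. a * b \<in> p \<longrightarrow> a \<in> p \<or> b \<in> p)"

definition graded_quasi_primary_ideal :: "('g \<Rightarrow> 'r::comm_ring_1 set) \<Rightarrow> 'r set \<Rightarrow> bool" where
  "graded_quasi_primary_ideal RG q \<longleftrightarrow> graded_ideal RG q \<and> q \<noteq> UNIV \<and>
     (\<forall>a\<in>hom RG. \<forall>b\<in>hom RG. a * b \<in> q \<longrightarrow> a \<in> Gr RG q \<or> b \<in> Gr RG q)"

definition graded_prime_submodule ::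
  "('g \<Rightarrow> 'r::comm_ring_1 set) \<Rightarrow> ('g \<Rightarrow> 'm::ab_group_add set) \<Rightarrow> ('r \<Rightarrow> 'm \<Rightarrow> 'm) \<Rightarrow> 'm set \<Rightarrow> bool" where
  "graded_prime_submodule RG MG scale P \<longleftrightarrow> graded_submodule MG scale P \<and> P \<noteq> UNIV \<and>
     (\<forall>r\<in>hom RG. \<forall>m\<in>hom MG. scale r m \<in> P \<longrightarrow> m \<in> P \<or> r \<in> colon scale P)"

text \<open>Gr_M(K): intersection of graded prime submodules containing K (M if there are none).\<close>
definition GrM ::
  "('g \<Rightarrow> 'r::comm_ring_1 set) \<Rightarrow> ('g \<Rightarrow> 'm::ab_group_add set) \<Rightarrow> ('r \<Rightarrow> 'm \<Rightarrow> 'm) \<Rightarrow> 'm set \<Rightarrow> 'm set" where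
  "GrM RG MG scale K = \<Inter> {P. graded_prime_submodule RG MG scale P \<and> K \<subseteq> P}"

definition graded_primeful ::
  "('g \<Rightarrow> 'r::comm_ring_1 set) \<Rightarrow> ('g \<Rightarrow> 'm::ab_group_add set) \<Rightarrow> ('r \<Rightarrow> 'm \<Rightarrow> 'm) \<Rightarrow> 'm set \<Rightarrow> bool" where
  "graded_primeful RG MG scale K \<longleftrightarrow>
     (\<forall>p. graded_prime_ideal RG p \<and> colon scale K \<subseteq> p \<longrightarrow>
        (\<exists>P. graded_prime_submodule RG MG scale P \<and> K \<subseteq> P \<and> colon scale P = p))"

definition graded_quasi_primary_submodule ::
  "('g \<Rightarrow> 'r::comm_ring_1 set) \<Rightarrow> ('g \<Rightarrow> 'm::ab_group_add set) \<Rightarrow> ('r \<Rightarrow> 'm \<Rightarrow> 'm) \<Rightarrow> 'm set \<Rightarrow> bool" where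
  "graded_quasi_primary_submodule RG MG scale Q \<longleftrightarrow> graded_submodule MG scale Q \<and> Q \<noteq> UNIV \<and>
     (\<forall>r\<in>hom RG. \<forall>m\<in>hom MG. scale r m \<in> Q \<longrightarrow>
        r \<in> Gr RG (colon scale Q) \<or> m \<in> GrM RG MG scale Q)"

definition qpSpec ::
  "('g \<Rightarrow> 'r::comm_ring_1 set) \<Rightarrow> ('g \<Rightarrow> 'm::ab_group_add set) \<Rightarrow> ('r \<Rightarrow> 'm \<Rightarrow> 'm) \<Rightarrow> 'm set set" where
  "qpSpec RG MG scale = {Q. graded_quasi_primary_submodule RG MG scale Q \<and> graded_primeful RG MG scale Q}"

definition qpV_M ::
  "('g \<Rightarrow> 'r::comm_ring_1 set) \<Rightarrow> ('g \<Rightarrow> 'm::ab_group_add set) \<Rightarrow> ('r \<Rightarrow> 'm \<Rightarrow> 'm) \<Rightarrow> 'm set \<Rightarrow> 'm set set" where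
  "qpV_M RG MG scale K =
     {Q \<in> qpSpec RG MG scale. Gr RG (colon scale K) \<subseteq> Gr RG (colon scale Q)}"

text \<open>By the correspondence theorem, an ideal of Rbar is
represented by its preimage in R, i.e. an ideal of R containing Ann(M); the map
I \<mapsto> Ibar is this identification.  Graded prime (resp. graded quasi-primary) ideals of
Rbar (with grading Rbar_g = image of R_g) correspond exactly to graded prime (resp.
graded quasi-primary) ideals of R containing Ann(M), and Gr commutes with the bar.\<close>

definition Spec_Rbar :: "('g \<Rightarrow> 'r::comm_ring_1 set) \<Rightarrow> ('r \<Rightarrow> 'm::ab_group_add \<Rightarrow> 'm) \<Rightarrow> 'r set set" where
  "Spec_Rbar RG scale = {p. graded_prime_ideal RG p \<and> Ann scale \<subseteq> p}"

definition V_Rbar :: "('g \<Rightarrow> 'r::comm_ring_1 set) \<Rightarrow> ('r \<Rightarrow> 'm::ab_group_add \<Rightarrow> 'm) \<Rightarrow> 'r set \<Rightarrow> 'r set set" where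
  "V_Rbar RG scale I = {p \<in> Spec_Rbar RG scale. I \<subseteq> p}"

definition qpSpec_Rbar :: "('g \<Rightarrow> 'r::comm_ring_1 set) \<Rightarrow> ('r \<Rightarrow> 'm::ab_group_add \<Rightarrow> 'm) \<Rightarrow> 'r set set" where
  "qpSpec_Rbar RG scale = {q. graded_quasi_primary_ideal RG q \<and> Ann scale \<subseteq> q}"

definition psi_q :: "('r \<Rightarrow> 'm \<Rightarrow> 'm) \<Rightarrow> 'm set \<Rightarrow> 'r set" where
  "psi_q scale Q = colon scale Q"

definition phi_R :: "('g \<Rightarrow> 'r::comm_ring_1 set) \<Rightarrow> 'r set \<Rightarrow> 'r set" where
  "phi_R RG q = Gr RG q"

definition qpV_Rbar :: "('g \<Rightarrow> 'r::comm_ring_1 set) \<Rightarrow> ('r \<Rightarrow> 'm::ab_group_add \<Rightarrow> 'm) \<Rightarrow> 'r set \<Rightarrow> 'r set set" where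
  "qpV_Rbar RG scale I = {q \<in> qpSpec_Rbar RG scale. phi_R RG q \<in> V_Rbar RG scale I}"

definition varphi ::
  "('g \<Rightarrow> 'r::comm_ring_1 set) \<Rightarrow> ('r \<Rightarrow> 'm \<Rightarrow> 'm) \<Rightarrow> 'm set \<Rightarrow> 'r set" where
  "varphi RG scale = phi_R RG \<circ> psi_q scale"

end

theory Submission
  imports Defs
begin

definition supp :: "('g \<Rightarrow> 'a::ab_group_add set) \<Rightarrow> 'a \<Rightarrow> 'g set" where
  "supp A x = {g. comp A x g \<noteq> 0}"

lemma dsum_comp: "internal_dsum A \<Longrightarrow> dsum_decomp A x (comp A x)"
  unfolding internal_dsum_def comp_def by (metis theI')

lemma dsum_unique: "internal_dsum A \<Longrightarrow> dsum_decomp A x c \<Longrightarrow> comp A x = c"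
  unfolding internal_dsum_def comp_def by (metis the1_equality)

lemma comp_in: "internal_dsum A \<Longrightarrow> comp A x g \<in> A g"
  using dsum_comp unfolding dsum_decomp_def by blast

lemma supp_finite: "internal_dsum A \<Longrightarrow> finite (supp A x)"
  using dsum_comp unfolding dsum_decomp_def supp_def by blast

lemma comp_sum_supp: "internal_dsum A \<Longrightarrow> x = sum (comp A x) (supp A x)"
  using dsum_comp unfolding dsum_decomp_def supp_def by blast

lemma comp_eqI:
  assumes "internal_dsum A" "finite S" "\<And>g. c g \<in> A g" "\<And>g. g \<notin> S \<Longrightarrow> c g = 0" "x = sum c S"
  shows "comp A x = c"
proof (rule dsum_unique[OF assms(1)])
  have sub: "{g. c g \<noteq> 0} \<subseteq> S" using assms(4) by blast
  have "sum c S = sum c {g. c g \<noteq> 0}"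
    by (rule sum.mono_neutral_right[OF assms(2) sub]) auto
  then show "dsum_decomp A x c" unfolding dsum_decomp_def
    using assms(2,3,5) finite_subset[OF sub] by auto
qed

lemma dsum_zero_in: "internal_dsum A \<Longrightarrow> 0 \<in> A g"
  unfolding internal_dsum_def additive_subgroup_def by blast

lemma dsum_add_in: "internal_dsum A \<Longrightarrow> x \<in> A g \<Longrightarrow> y \<in> A g \<Longrightarrow> x + y \<in> A g"
  unfolding internal_dsum_def additive_subgroup_def by blast

lemma comp_add: "internal_dsum A \<Longrightarrow> comp A (x + y) = (\<lambda>g. comp A x g + comp A y g)"
proof (rule comp_eqI[where S = "supp A x \<union> supp A y"])
  assume A: "internal_dsum A"
  show "finite (supp A x \<union> supp A y)" using supp_finite[OF A] by auto
  show "comp A x g + comp A y g \<in> A g" for g using A comp_in dsum_add_in by metis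
  show "comp A x g + comp A y g = 0" if "g \<notin> supp A x \<union> supp A y" for g
    using that unfolding supp_def by auto
  have "x = sum (comp A x) (supp A x \<union> supp A y)"
    by (subst comp_sum_supp[OF A], rule sum.mono_neutral_left)
       (auto simp: supp_finite[OF A] supp_finite[OF A, unfolded supp_def] supp_def)
  moreover have "y = sum (comp A y) (supp A x \<union> supp A y)"
    by (subst comp_sum_supp[OF A], rule sum.mono_neutral_left)
       (auto simp: supp_finite[OF A] supp_finite[OF A, unfolded supp_def] supp_def)
  ultimately show "x + y = (\<Sum>g\<in>supp A x \<union> supp A y. comp A x g + comp A y g)"
    by (simp add: sum.distrib)
qed

lemma comp_zero: "internal_dsum A \<Longrightarrow> comp A 0 = (\<lambda>g. 0)"
  by (rule comp_eqI[where S="{}"]) (auto simp: dsum_zero_in)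

lemma comp_hom: "internal_dsum A \<Longrightarrow> a \<in> A g \<Longrightarrow> comp A a = (\<lambda>h. if h = g then a else 0)"
  by (rule comp_eqI[where S="{g}"]) (auto simp: dsum_zero_in)

lemma comp_sum: "internal_dsum A \<Longrightarrow> comp A (sum f F) g = (\<Sum>i\<in>F. comp A (f i) g)"
  by (induction F rule: infinite_finite_induct) (auto simp: comp_zero comp_add)

lemma comp_sum_list: "internal_dsum A \<Longrightarrow> comp A (sum_list xs) g = sum_list (map (\<lambda>x. comp A x g) xs)"
  by (induction xs) (auto simp: comp_zero comp_add)

lemma comp_bilin:
  fixes RG :: "'g::group_add \<Rightarrow> 'r::ab_group_add set"
  assumes R: "internal_dsum RG" and M: "internal_dsum MG"
    and add: "\<And>x y. f (x + y) = f x + f y"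
    and deg: "\<And>g a. a \<in> RG g \<Longrightarrow> f a \<in> MG (g + h)"
  shows "comp MG (f r) = (\<lambda>k. f (comp RG r (k - h)))"
proof -
  interpret additive f by standard (rule add)
  show ?thesis
  proof (rule comp_eqI[OF M, where S = "(\<lambda>g. g + h) ` supp RG r"])
    show "finite ((\<lambda>g. g + h) ` supp RG r)" using supp_finite[OF R] by auto
    show "f (comp RG r (k - h)) \<in> MG k" for k
      using deg[OF comp_in[OF R, of r "k - h"]] by (metis diff_add_cancel)
    show "f (comp RG r (k - h)) = 0" if "k \<notin> (\<lambda>g. g + h) ` supp RG r" for k
    proof -
      have "k - h \<notin> supp RG r" using that by (metis diff_add_cancel image_eqI)
      then show ?thesis by (simp add: supp_def zero)
    qed
    have "f r = f (sum (comp RG r) (supp RG r))" using comp_sum_supp[OF R] by metis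
    also have "\<dots> = (\<Sum>g\<in>supp RG r. f (comp RG r g))" by (simp add: sum)
    also have "\<dots> = (\<Sum>k\<in>(\<lambda>g. g + h) ` supp RG r. f (comp RG r (k - h)))"
      by (subst sum.reindex) (auto simp: inj_on_def)
    finally show "f r = (\<Sum>k\<in>(\<lambda>g. g + h) ` supp RG r. f (comp RG r (k - h)))" .
  qed
qed

locale gm =
  fixes RG :: "'g::group_add \<Rightarrow> 'r::comm_ring_1 set"
    and MG :: "'g \<Rightarrow> 'm::ab_group_add set"
    and scale :: "'r \<Rightarrow> 'm \<Rightarrow> 'm"
  assumes gm: "graded_module RG MG scale"
begin

lemma R: "internal_dsum RG" using gm unfolding graded_module_def graded_ring_def by blast
lemma M: "internal_dsum MG" using gm unfolding graded_module_def by blast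
lemma Rmul: "a \<in> RG g \<Longrightarrow> b \<in> RG h \<Longrightarrow> a * b \<in> RG (g + h)"
  using gm unfolding graded_module_def graded_ring_def by blast
lemma Mmul: "a \<in> RG g \<Longrightarrow> m \<in> MG h \<Longrightarrow> scale a m \<in> MG (g + h)"
  using gm unfolding graded_module_def by blast
lemma modl: "module scale" using gm unfolding graded_module_def by blast

sublocale module scale by (rule modl)

lemma comp_rmul: "b \<in> RG h \<Longrightarrow> comp RG (r * b) = (\<lambda>k. comp RG r (k - h) * b)"
  by (rule comp_bilin[OF R R, where f = "\<lambda>x. x * b"]) (auto simp: distrib_right Rmul)

lemma comp_smul: "m \<in> MG h \<Longrightarrow> comp MG (scale r m) = (\<lambda>k. scale (comp RG r (k - h)) m)"
  by (rule comp_bilin[OF R M, where f = "\<lambda>x. scale x m"]) (auto simp: scale_left_distrib Mmul)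

lemma one_R0: "1 \<in> RG 0"
proof -
  define e where "e = comp RG 1"
  have hom: "e 0 * x = x" if "x \<in> RG h" for x h
  proof -
    have "comp RG (1 * x) h = e (h - h) * x" using comp_rmul[OF that, of 1] by (simp add: e_def)
    moreover have "comp RG x h = x" using comp_hom[OF R that] by simp
    ultimately show ?thesis by simp
  qed
  have "e 0 * r = r" for r
  proof -
    have "e 0 * r = e 0 * sum (comp RG r) (supp RG r)" using comp_sum_supp[OF R] by metis
    also have "\<dots> = sum (\<lambda>g. e 0 * comp RG r g) (supp RG r)" by (simp add: sum_distrib_left)
    also have "\<dots> = sum (comp RG r) (supp RG r)" using hom comp_in[OF R] by (intro sum.cong) auto
    finally show ?thesis using comp_sum_supp[OF R] by metis
  qed
  from this[of 1] have "e 0 = 1" by simp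
  then show ?thesis using comp_in[OF R, of 1 0] e_def by simp
qed

lemma comp_one: "comp RG 1 = (\<lambda>k. if k = 0 then 1 else 0)"
  using comp_hom[OF R one_R0] .

lemma hom_pow: "a \<in> RG g \<Longrightarrow> a ^ n \<in> hom RG"
proof (induction n)
  case 0 then show ?case using one_R0 by (auto simp: hom_def)
next
  case (Suc n) then show ?case using Rmul by (fastforce simp: hom_def)
qed

lemma hom_mult: "a \<in> hom RG \<Longrightarrow> b \<in> hom RG \<Longrightarrow> a * b \<in> hom RG"
  using Rmul by (fastforce simp: hom_def)

lemma ideal_sum: "is_ideal J \<Longrightarrow> (\<And>i. i \<in> S \<Longrightarrow> f i \<in> J) \<Longrightarrow> sum f S \<in> J"
  by (induction S rule: infinite_finite_induct) (auto simp: is_ideal_def)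

lemma ideal_mult: "is_ideal J \<Longrightarrow> x \<in> J \<Longrightarrow> r * x \<in> J"
  by (auto simp: is_ideal_def)

lemma ideal_add: "is_ideal J \<Longrightarrow> x \<in> J \<Longrightarrow> y \<in> J \<Longrightarrow> x + y \<in> J"
  by (auto simp: is_ideal_def)

lemma ideal_one: "is_ideal J \<Longrightarrow> 1 \<in> J \<Longrightarrow> J = UNIV"
  using ideal_mult[of J 1] by auto

lemma graded_ideal_comps: "graded_ideal RG J \<Longrightarrow> x \<in> J \<longleftrightarrow> (\<forall>g. comp RG x g \<in> J)"
  unfolding graded_ideal_def using ideal_sum comp_sum_supp[OF R] by metis

lemma Gr_hom: "c \<in> RG k \<Longrightarrow> is_ideal X \<Longrightarrow> c \<in> Gr RG X \<longleftrightarrow> (\<exists>n. c ^ n \<in> X)"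
  unfolding Gr_def using comp_hom[OF R] 
  by (auto simp: is_ideal_def) (metis power_one_right)

lemma Gr_mono: "X \<subseteq> Y \<Longrightarrow> Gr RG X \<subseteq> Gr RG Y"
  unfolding Gr_def by blast

lemma subset_Gr: "graded_ideal RG X \<Longrightarrow> X \<subseteq> Gr RG X"
  unfolding Gr_def graded_ideal_def by (auto intro: exI[of _ 1])

lemma prime_pow: "graded_prime_ideal RG p \<Longrightarrow> a \<in> hom RG \<Longrightarrow> a ^ n \<in> p \<Longrightarrow> a \<in> p"
proof (induction n)
  case 0 then show ?case using ideal_one unfolding graded_prime_ideal_def graded_ideal_def by auto
next
  case (Suc n)
  have "a ^ n \<in> hom RG" using Suc.prems(2) hom_pow by (auto simp: hom_def)
  then show ?case using Suc unfolding graded_prime_ideal_def by auto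
qed

lemma Gr_sub_prime: "graded_prime_ideal RG p \<Longrightarrow> X \<subseteq> p \<Longrightarrow> Gr RG X \<subseteq> p"
proof
  fix r assume p: "graded_prime_ideal RG p" and X: "X \<subseteq> p" and r: "r \<in> Gr RG X"
  have "comp RG r g \<in> p" for g
  proof -
    obtain n where "comp RG r g ^ n \<in> X" using r unfolding Gr_def by blast
    then show ?thesis using prime_pow[OF p, of "comp RG r g" n] X comp_in[OF R] by (auto simp: hom_def)
  qed
  then show "r \<in> p" using p graded_ideal_comps unfolding graded_prime_ideal_def by blast
qed

end

context gm begin

lemma ext_graded:
  assumes p: "graded_ideal RG p" and a: "a \<in> RG h"
  shows "graded_ideal RG {u + t * a | u t. u \<in> p}"
proof -
  have ip: "is_ideal p" using p by (simp add: graded_ideal_def)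
  have "is_ideal {u + t * a | u t. u \<in> p}"
    unfolding is_ideal_def
  proof (intro conjI ballI allI)
    show "0 \<in> {u + t * a | u t. u \<in> p}" using ip by (auto simp: is_ideal_def intro!: exI[of _ 0])
    fix x y assume "x \<in> {u + t * a | u t. u \<in> p}" "y \<in> {u + t * a | u t. u \<in> p}"
    then obtain u t v s where "u \<in> p" "v \<in> p" "x = u + t * a" "y = v + s * a" by blast
    then show "x + y \<in> {u + t * a | u t. u \<in> p}"
    proof -
      have "x + y = (u + v) + (t + s) * a" using \<open>x = u + t * a\<close> \<open>y = v + s * a\<close> by (simp add: algebra_simps)
      moreover have "u + v \<in> p" using ideal_add[OF ip] \<open>u \<in> p\<close> \<open>v \<in> p\<close> by blast
      ultimately show ?thesis by blast
    qed
  next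
    fix r x assume "x \<in> {u + t * a | u t. u \<in> p}"
    then obtain u t where "u \<in> p" "x = u + t * a" by blast
    then show "r * x \<in> {u + t * a | u t. u \<in> p}"
    proof -
      have "r * x = (r * u) + (r * t) * a" using \<open>x = u + t * a\<close> by (simp add: algebra_simps)
      moreover have "r * u \<in> p" using ideal_mult[OF ip] \<open>u \<in> p\<close> by blast
      ultimately show ?thesis by blast
    qed
  qed
  moreover have "comp RG x g \<in> {u + t * a | u t. u \<in> p}" if xK: "x \<in> {u + t * a | u t. u \<in> p}" for x g
  proof -
    obtain u t where u: "u \<in> p" "x = u + t * a" using xK by blast
    have "comp RG x g = comp RG u g + comp RG t (g - h) * a"
      using u comp_add[OF R] comp_rmul[OF a] by simp
    moreover have "comp RG u g \<in> p" using p u by (simp add: graded_ideal_def)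
    ultimately show ?thesis by blast
  qed
  ultimately show ?thesis unfolding graded_ideal_def by blast
qed

lemma key:
  assumes J: "graded_ideal RG J" and x: "x \<notin> Gr RG J"
  shows "\<exists>p. graded_prime_ideal RG p \<and> J \<subseteq> p \<and> x \<notin> p"
proof -
  obtain g0 where y: "\<And>n. comp RG x g0 ^ n \<notin> J" using x unfolding Gr_def by blast
  define y where "y = comp RG x g0"
  define F where "F = {K. graded_ideal RG K \<and> J \<subseteq> K \<and> (\<forall>n. y ^ n \<notin> K)}"
  have "F \<noteq> {}" using J y unfolding F_def y_def by blast
  moreover have "\<Union>C \<in> F" if C: "C \<noteq> {}" "subset.chain F C" for C
  proof -
    have CF: "C \<subseteq> F" and ch: "\<And>A B. A \<in> C \<Longrightarrow> B \<in> C \<Longrightarrow> A \<subseteq> B \<or> B \<subseteq> A"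
      using C(2) unfolding subset.chain_def by auto
    have gi: "\<And>K. K \<in> C \<Longrightarrow> graded_ideal RG K" using CF unfolding F_def by blast
    have "is_ideal (\<Union>C)" unfolding is_ideal_def
    proof (intro conjI ballI allI)
      show "0 \<in> \<Union>C" using C(1) gi by (auto simp: graded_ideal_def is_ideal_def)
      fix a b assume "a \<in> \<Union>C" "b \<in> \<Union>C"
      then obtain A B where AB: "A \<in> C" "B \<in> C" "a \<in> A" "b \<in> B" by blast
      show "a + b \<in> \<Union>C"
      proof (cases "A \<subseteq> B")
        case True then have "a + b \<in> B" using AB gi[of B] ideal_add by (auto simp: graded_ideal_def)
        then show ?thesis using AB by blast
      next
        case False then have "B \<subseteq> A" using ch AB by blast
        then have "a + b \<in> A" using AB gi[of A] ideal_add by (auto simp: graded_ideal_def)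
        then show ?thesis using AB by blast
      qed
    next
      fix r a assume "a \<in> \<Union>C"
      then obtain A where "A \<in> C" "a \<in> A" by blast
      then have "r * a \<in> A" using gi[of A] ideal_mult[of A a r] by (auto simp: graded_ideal_def)
      then show "r * a \<in> \<Union>C" using \<open>A \<in> C\<close> by blast
    qed
    moreover have "\<forall>a\<in>\<Union>C. \<forall>g. comp RG a g \<in> \<Union>C" using gi by (auto simp: graded_ideal_def)
    moreover have "J \<subseteq> \<Union>C" using C(1) CF unfolding F_def by blast
    moreover have "\<forall>n. y ^ n \<notin> \<Union>C" using CF unfolding F_def by blast
    ultimately show ?thesis unfolding F_def graded_ideal_def by blast
  qed
  ultimately obtain p where pF: "p \<in> F" and max: "\<And>X. X \<in> F \<Longrightarrow> p \<subseteq> X \<Longrightarrow> X = p"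
    using subset_Zorn_nonempty[of F] by blast
  have gp: "graded_ideal RG p" and Jp: "J \<subseteq> p" and yp: "\<And>n. y ^ n \<notin> p"
    using pF unfolding F_def by auto
  have ip: "is_ideal p" using gp by (simp add: graded_ideal_def)
  have ext: "\<exists>n u t. u \<in> p \<and> y ^ n = u + t * a" if a: "a \<in> hom RG" "a \<notin> p" for a
  proof -
    obtain h where ah: "a \<in> RG h" using a by (auto simp: hom_def)
    let ?K = "{u + t * a | u t. u \<in> p}"
    have gK: "graded_ideal RG ?K" by (rule ext_graded[OF gp ah])
    have "p \<subseteq> ?K"
    proof
      fix z assume "z \<in> p"
      moreover have "z = z + 0 * a" by simp
      ultimately show "z \<in> ?K" by blast
    qed
    moreover have "a \<in> ?K"
    proof -
      have "a = 0 + 1 * a" by simp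
      moreover have "(0::'r) \<in> p" using ip by (simp add: is_ideal_def)
      ultimately show ?thesis by blast
    qed
    ultimately have "?K \<notin> F" using max a(2) by blast
    then have "\<exists>n. y ^ n \<in> ?K" using gK Jp \<open>p \<subseteq> ?K\<close> unfolding F_def by blast
    then show ?thesis by blast
  qed
  have prime: "graded_prime_ideal RG p"
    unfolding graded_prime_ideal_def
  proof (intro conjI ballI impI)
    show "graded_ideal RG p" by (rule gp)
    show "p \<noteq> UNIV" using yp[of 0] by auto
    fix a b assume a: "a \<in> hom RG" and b: "b \<in> hom RG" and ab: "a * b \<in> p"
    show "a \<in> p \<or> b \<in> p"
    proof (rule ccontr)
      assume "\<not> (a \<in> p \<or> b \<in> p)"
      then obtain n u t m v s where uv: "u \<in> p" "v \<in> p" "y ^ n = u + t * a" "y ^ m = v + s * b"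
        using ext a b by meson
      have "y ^ (n + m) = u * (v + s * b) + v * (t * a) + (t * s) * (a * b)"
        by (simp add: power_add uv algebra_simps)
      also have "\<dots> \<in> p" using uv ab ip ideal_add ideal_mult by (metis mult.commute)
      finally show False using yp by blast
    qed
  qed
  moreover have "x \<notin> p" using gp yp[of 1] unfolding y_def graded_ideal_def by auto
  ultimately show ?thesis using Jp by blast
qed

lemma Gr_eq: "graded_ideal RG J \<Longrightarrow> Gr RG J = \<Inter>{p. graded_prime_ideal RG p \<and> J \<subseteq> p}"
  using key Gr_sub_prime by blast

lemma inter_graded: "(\<And>p. p \<in> S \<Longrightarrow> graded_ideal RG p) \<Longrightarrow> graded_ideal RG (\<Inter>S)"
  unfolding graded_ideal_def is_ideal_def by blast

lemma Gr_graded: "graded_ideal RG J \<Longrightarrow> graded_ideal RG (Gr RG J)"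
  by (subst Gr_eq) (auto intro!: inter_graded simp: graded_prime_ideal_def)

end

context gm begin

lemma submod_sum: "is_submodule scale N \<Longrightarrow> (\<And>i. i \<in> S \<Longrightarrow> f i \<in> N) \<Longrightarrow> sum f S \<in> N"
  by (induction S rule: infinite_finite_induct) (auto simp: is_submodule_def)

lemma decomp_scale: "scale r m = (\<Sum>h\<in>supp MG m. scale r (comp MG m h))"
proof -
  have "scale r m = scale r (sum (comp MG m) (supp MG m))" using comp_sum_supp[OF M] by metis
  then show ?thesis by (simp add: scale_sum_right)
qed

lemma colon_mono: "A \<subseteq> B \<Longrightarrow> colon scale A \<subseteq> colon scale B"
  unfolding colon_def by blast

lemma colon_graded:
  assumes Q: "graded_submodule MG scale Q"
  shows "graded_ideal RG (colon scale Q)"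
proof -
  have sQ: "is_submodule scale Q" using Q by (simp add: graded_submodule_def)
  have "is_ideal (colon scale Q)"
    unfolding is_ideal_def colon_def
  proof (intro conjI ballI allI CollectI)
    show "scale 0 m \<in> Q" for m using sQ by (simp add: is_submodule_def)
    show "scale (x + y) m \<in> Q" if "x \<in> {r. \<forall>m. scale r m \<in> Q}" "y \<in> {r. \<forall>m. scale r m \<in> Q}" for x y m
      using that sQ by (simp add: scale_left_distrib is_submodule_def)
    show "scale (r * x) m \<in> Q" if "x \<in> {r. \<forall>m. scale r m \<in> Q}" for r x m
      using that sQ by (metis mem_Collect_eq scale_scale mult.commute is_submodule_def)
  qed
  moreover have "comp RG r g \<in> colon scale Q" if r: "r \<in> colon scale Q" for r g
    unfolding colon_def
  proof (intro CollectI allI)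
    fix m
    have "scale (comp RG r g) (comp MG m h) \<in> Q" for h
    proof -
      have "comp MG (scale r (comp MG m h)) (g + h) = scale (comp RG r (g + h - h)) (comp MG m h)"
        using comp_smul[OF comp_in[OF M]] by simp
      moreover have "comp MG (scale r (comp MG m h)) (g + h) \<in> Q"
        using Q r unfolding graded_submodule_def colon_def by blast
      ultimately show ?thesis by (simp add: add_diff_cancel)
    qed
    then have "(\<Sum>h\<in>supp MG m. scale (comp RG r g) (comp MG m h)) \<in> Q" by (intro submod_sum[OF sQ])
    then show "scale (comp RG r g) m \<in> Q" using decomp_scale by metis
  qed
  ultimately show ?thesis unfolding graded_ideal_def by blast
qed

lemma colon_proper: "Q \<noteq> UNIV \<Longrightarrow> colon scale Q \<noteq> UNIV"
proof
  assume "Q \<noteq> UNIV" "colon scale Q = UNIV"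
  then have "\<forall>m. scale 1 m \<in> Q" unfolding colon_def by blast
  then show False using \<open>Q \<noteq> UNIV\<close> by auto
qed

lemma Ann_colon: "is_submodule scale Q \<Longrightarrow> Ann scale \<subseteq> colon scale Q"
  unfolding Ann_def colon_def is_submodule_def by auto

abbreviation IM where "IM I \<equiv> ideal_times_module scale I"

lemma IM_induct[consumes 1, case_names zero step]:
  assumes "x \<in> IM I" "P 0" "\<And>r m y. r \<in> I \<Longrightarrow> P y \<Longrightarrow> P (scale r m + y)"
  shows "P x"
proof -
  obtain xs where xs: "set (map fst xs) \<subseteq> I" "x = (\<Sum>(r, m)\<leftarrow>xs. scale r m)"
    using assms(1) unfolding ideal_times_module_def by blast
  have "P (\<Sum>(r, m)\<leftarrow>xs. scale r m)" using xs(1)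
    by (induction xs) (auto intro: assms(2,3))
  then show ?thesis using xs(2) by simp
qed

lemma IM_0: "0 \<in> IM I"
  unfolding ideal_times_module_def by (auto intro!: exI[of _ "[]"])

lemma IM_single_add: "r \<in> I \<Longrightarrow> y \<in> IM I \<Longrightarrow> scale r m + y \<in> IM I"
proof -
  assume r: "r \<in> I" and "y \<in> IM I"
  then obtain xs where xs: "set (map fst xs) \<subseteq> I" "y = (\<Sum>(r, m)\<leftarrow>xs. scale r m)"
    unfolding ideal_times_module_def by blast
  then have "set (map fst ((r, m) # xs)) \<subseteq> I" "scale r m + y = (\<Sum>(r, m)\<leftarrow>((r,m) # xs). scale r m)"
    using r by auto
  then show ?thesis unfolding ideal_times_module_def by blast
qed

lemma IM_single: "r \<in> I \<Longrightarrow> scale r m \<in> IM I"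
  using IM_single_add[OF _ IM_0, of r I m] by simp

lemma IM_add: "x \<in> IM I \<Longrightarrow> y \<in> IM I \<Longrightarrow> x + y \<in> IM I"
  by (induction x rule: IM_induct) (auto simp: add.assoc IM_single_add)

lemma IM_submodule: "is_ideal I \<Longrightarrow> is_submodule scale (IM I)"
  unfolding is_submodule_def
proof (intro conjI ballI allI)
  assume I: "is_ideal I"
  show "0 \<in> IM I" by (rule IM_0)
  show "x + y \<in> IM I" if "x \<in> IM I" "y \<in> IM I" for x y using IM_add that by blast
  show "scale s x \<in> IM I" if "x \<in> IM I" for s x
    using that
  proof (induction x rule: IM_induct)
    case zero then show ?case by (simp add: IM_0)
  next
    case (step r m y)
    have "scale s (scale r m + y) = scale (s * r) m + scale s y" by (simp add: scale_right_distrib)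
    moreover have "s * r \<in> I" using ideal_mult[OF I step(1)] .
    ultimately show ?case using IM_single_add step(2) by simp
  qed
qed

lemma IM_graded:
  assumes I: "graded_ideal RG I"
  shows "graded_submodule MG scale (IM I)"
proof -
  have iI: "is_ideal I" using I by (simp add: graded_ideal_def)
  have sub: "is_submodule scale (IM I)" by (rule IM_submodule[OF iI])
  have "comp MG x g \<in> IM I" if "x \<in> IM I" for x g
    using that
  proof (induction x rule: IM_induct)
    case zero then show ?case by (simp add: comp_zero[OF M] IM_0)
  next
    case (step r m y)
    have "comp MG (scale r m) g = (\<Sum>h\<in>supp MG m. comp MG (scale r (comp MG m h)) g)"
      by (subst decomp_scale) (simp add: comp_sum[OF M])
    also have "\<dots> = (\<Sum>h\<in>supp MG m. scale (comp RG r (g - h)) (comp MG m h))"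
      using comp_smul[OF comp_in[OF M]] by simp
    also have "\<dots> \<in> IM I"
      by (rule submod_sum[OF sub], rule IM_single) (use I step in \<open>simp add: graded_ideal_def\<close>)
    finally show ?case using step by (simp add: comp_add[OF M] IM_add)
  qed
  then show ?thesis using sub unfolding graded_submodule_def by blast
qed

lemma GrM_colon:
  assumes Q: "graded_submodule MG scale Q" and pf: "graded_primeful RG MG scale Q"
  shows "colon scale (GrM RG MG scale Q) \<subseteq> Gr RG (colon scale Q)"
proof -
  have "colon scale (GrM RG MG scale Q) \<subseteq> p"
    if p: "graded_prime_ideal RG p" "colon scale Q \<subseteq> p" for p
  proof -
    obtain P where P: "graded_prime_submodule RG MG scale P" "Q \<subseteq> P" "colon scale P = p"
      using pf p unfolding graded_primeful_def by blast
    have "GrM RG MG scale Q \<subseteq> P" using P unfolding GrM_def by blast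
    then show ?thesis using colon_mono P(3) by blast
  qed
  then show ?thesis using Gr_eq[OF colon_graded[OF Q]] by blast
qed

lemma part1:
  assumes Q: "Q \<in> qpSpec RG MG scale"
  shows "colon scale Q \<in> qpSpec_Rbar RG scale"
proof -
  have qp: "graded_quasi_primary_submodule RG MG scale Q" and pf: "graded_primeful RG MG scale Q"
    using Q unfolding qpSpec_def by auto
  have gQ: "graded_submodule MG scale Q" and QU: "Q \<noteq> UNIV"
    using qp unfolding graded_quasi_primary_submodule_def by auto
  have sQ: "is_submodule scale Q" using gQ by (simp add: graded_submodule_def)
  have "a \<in> Gr RG (colon scale Q) \<or> b \<in> Gr RG (colon scale Q)"
    if a: "a \<in> hom RG" and b: "b \<in> hom RG" and ab: "a * b \<in> colon scale Q" for a b
  proof (cases "a \<in> Gr RG (colon scale Q)")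
    case True then show ?thesis by blast
  next
    case False note na = False
    obtain k where bk: "b \<in> RG k" using b by (auto simp: hom_def)
    have hm: "scale b (comp MG m h) \<in> GrM RG MG scale Q" for m h
    proof -
      have "scale b (comp MG m h) \<in> hom MG" using Mmul[OF bk comp_in[OF M]] by (auto simp: hom_def)
      moreover have "scale a (scale b (comp MG m h)) \<in> Q" using ab unfolding colon_def by simp
      ultimately show ?thesis using qp a na unfolding graded_quasi_primary_submodule_def by blast
    qed
    have "b \<in> colon scale (GrM RG MG scale Q)"
      unfolding colon_def
    proof (intro CollectI allI)
      fix m
      show "scale b m \<in> GrM RG MG scale Q"
        unfolding GrM_def
      proof
        fix P assume "P \<in> {P. graded_prime_submodule RG MG scale P \<and> Q \<subseteq> P}"
        then have sP: "is_submodule scale P" and "GrM RG MG scale Q \<subseteq> P"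
          unfolding graded_prime_submodule_def graded_submodule_def GrM_def by auto
        then have "(\<Sum>h\<in>supp MG m. scale b (comp MG m h)) \<in> P" using hm by (intro submod_sum[OF sP]) blast
        then show "scale b m \<in> P" using decomp_scale by metis
      qed
    qed
    then have "b \<in> Gr RG (colon scale Q)" using GrM_colon[OF gQ pf] by blast
    then show ?thesis by blast
  qed
  then show ?thesis
    unfolding qpSpec_Rbar_def graded_quasi_primary_ideal_def
    using colon_graded[OF gQ] colon_proper[OF QU] Ann_colon[OF sQ] by blast
qed

lemma part2:
  assumes q: "q \<in> qpSpec_Rbar RG scale"
  shows "phi_R RG q \<in> Spec_Rbar RG scale"
proof -
  have qq: "graded_quasi_primary_ideal RG q" and Aq: "Ann scale \<subseteq> q"
    using q unfolding qpSpec_Rbar_def by auto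
  have gq: "graded_ideal RG q" and qU: "q \<noteq> UNIV"
    using qq unfolding graded_quasi_primary_ideal_def by auto
  have iq: "is_ideal q" using gq by (simp add: graded_ideal_def)
  have gG: "graded_ideal RG (Gr RG q)" by (rule Gr_graded[OF gq])
  have "1 \<notin> Gr RG q"
  proof
    assume "1 \<in> Gr RG q"
    then obtain n where "(1::'r) ^ n \<in> q" using Gr_hom[OF one_R0 iq] by blast
    then show False using ideal_one[OF iq] qU by simp
  qed
  then have GU: "Gr RG q \<noteq> UNIV" by blast
  have pow_Gr: "c \<in> Gr RG q" if c: "c \<in> hom RG" "c ^ n \<in> Gr RG q" for c n
  proof -
    obtain k where ck: "c \<in> RG k" using c by (auto simp: hom_def)
    obtain k' where ck': "c ^ n \<in> RG k'" using hom_pow[OF ck, of n] by (auto simp: hom_def)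
    obtain m where "(c ^ n) ^ m \<in> q" using Gr_hom[OF ck' iq] c by blast
    then show ?thesis using Gr_hom[OF ck iq] by (metis power_mult)
  qed
  have "a \<in> Gr RG q \<or> b \<in> Gr RG q"
    if a: "a \<in> hom RG" and b: "b \<in> hom RG" and ab: "a * b \<in> Gr RG q" for a b
  proof -
    obtain k where abk: "a * b \<in> RG k" using hom_mult[OF a b] by (auto simp: hom_def)
    obtain n where "(a * b) ^ n \<in> q" using Gr_hom[OF abk iq] ab by blast
    then have "a ^ n * b ^ n \<in> q" by (simp add: power_mult_distrib)
    moreover have "a ^ n \<in> hom RG" "b ^ n \<in> hom RG" using a b hom_pow by (auto simp: hom_def)
    ultimately have "a ^ n \<in> Gr RG q \<or> b ^ n \<in> Gr RG q"
      using qq unfolding graded_quasi_primary_ideal_def by blast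
    then show ?thesis using pow_Gr a b by blast
  qed
  moreover have "Ann scale \<subseteq> Gr RG q" using Aq subset_Gr[OF gq] by blast
  ultimately show ?thesis
    unfolding Spec_Rbar_def graded_prime_ideal_def phi_R_def using gG GU by blast
qed

end

context gm begin

lemma part6:
  assumes Q: "Q \<in> qpSpec RG MG scale" and I: "graded_ideal RG I"
  shows "I \<subseteq> Gr RG (colon scale Q) \<longleftrightarrow> Gr RG (colon scale (IM I)) \<subseteq> Gr RG (colon scale Q)"
proof
  have gQ: "graded_submodule MG scale Q" and pf: "graded_primeful RG MG scale Q"
    using Q unfolding qpSpec_def graded_quasi_primary_submodule_def by auto
  assume IG: "I \<subseteq> Gr RG (colon scale Q)"
  have "Gr RG (colon scale (IM I)) \<subseteq> p" if p: "graded_prime_ideal RG p" "colon scale Q \<subseteq> p" for p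
  proof -
    obtain P where P: "graded_prime_submodule RG MG scale P" "Q \<subseteq> P" "colon scale P = p"
      using pf p unfolding graded_primeful_def by blast
    have sP: "is_submodule scale P" using P(1)
      unfolding graded_prime_submodule_def graded_submodule_def by blast
    have Ip: "I \<subseteq> p" using IG Gr_sub_prime[OF p] by blast
    have "x \<in> P" if "x \<in> IM I" for x
      using that
    proof (induction x rule: IM_induct)
      case zero then show ?case using sP by (simp add: is_submodule_def)
    next
      case (step r m y)
      then have "scale r m \<in> P" using Ip P(3) unfolding colon_def by blast
      then show ?case using step sP by (simp add: is_submodule_def)
    qed
    then have "colon scale (IM I) \<subseteq> p" using colon_mono P(3) by blast
    then show ?thesis using Gr_sub_prime[OF p(1)] by blast
  qed
  then show "Gr RG (colon scale (IM I)) \<subseteq> Gr RG (colon scale Q)"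
    using Gr_eq[OF colon_graded[OF gQ]] by blast
next
  assume "Gr RG (colon scale (IM I)) \<subseteq> Gr RG (colon scale Q)"
  moreover have "I \<subseteq> colon scale (IM I)" unfolding colon_def using IM_single by blast
  ultimately show "I \<subseteq> Gr RG (colon scale Q)"
    using subset_Gr[OF I] Gr_mono by blast
qed

end

theorem theorem3p11:
  fixes RG :: "'g::group_add \<Rightarrow> 'r::comm_ring_1 set"
    and MG :: "'g \<Rightarrow> 'm::ab_group_add set"
    and scale :: "'r \<Rightarrow> 'm \<Rightarrow> 'm"
    and I :: "'r set"
  assumes "graded_module RG MG scale"
    and "graded_ideal RG I"
    and "Ann scale \<subseteq> I"
  shows "psi_q scale ` qpSpec RG MG scale \<subseteq> qpSpec_Rbar RG scale
    \<and> phi_R RG ` qpSpec_Rbar RG scale \<subseteq> Spec_Rbar RG scale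
    \<and> varphi RG scale ` qpSpec RG MG scale \<subseteq> Spec_Rbar RG scale
    \<and> qpSpec RG MG scale \<inter> varphi RG scale -` V_Rbar RG scale I
        = qpSpec RG MG scale \<inter> (phi_R RG \<circ> psi_q scale) -` V_Rbar RG scale I
    \<and> qpSpec RG MG scale \<inter> (phi_R RG \<circ> psi_q scale) -` V_Rbar RG scale I
        = qpSpec RG MG scale \<inter> psi_q scale -` qpV_Rbar RG scale I
    \<and> qpSpec RG MG scale \<inter> psi_q scale -` qpV_Rbar RG scale I
        = qpV_M RG MG scale (ideal_times_module scale I)
    \<and> graded_submodule MG scale (ideal_times_module scale I)"
proof -
  interpret gm RG MG scale by unfold_locales (rule assms(1))
  have p1: "psi_q scale ` qpSpec RG MG scale \<subseteq> qpSpec_Rbar RG scale"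
    using part1 by (auto simp: psi_q_def)
  have p2: "phi_R RG ` qpSpec_Rbar RG scale \<subseteq> Spec_Rbar RG scale"
    using part2 by auto
  have p3: "varphi RG scale ` qpSpec RG MG scale \<subseteq> Spec_Rbar RG scale"
    using p1 p2 by (auto simp: varphi_def)
  have p4: "qpSpec RG MG scale \<inter> varphi RG scale -` V_Rbar RG scale I
        = qpSpec RG MG scale \<inter> (phi_R RG \<circ> psi_q scale) -` V_Rbar RG scale I"
    by (simp add: varphi_def)
  have p5: "qpSpec RG MG scale \<inter> (phi_R RG \<circ> psi_q scale) -` V_Rbar RG scale I
        = qpSpec RG MG scale \<inter> psi_q scale -` qpV_Rbar RG scale I"
    using p1 by (auto simp: qpV_Rbar_def)
  have p6: "qpSpec RG MG scale \<inter> psi_q scale -` qpV_Rbar RG scale I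
        = qpV_M RG MG scale (ideal_times_module scale I)"
  proof (intro set_eqI iffI)
    fix Q assume "Q \<in> qpSpec RG MG scale \<inter> psi_q scale -` qpV_Rbar RG scale I"
    then have Q: "Q \<in> qpSpec RG MG scale" and "I \<subseteq> Gr RG (colon scale Q)"
      by (auto simp: qpV_Rbar_def V_Rbar_def phi_R_def psi_q_def)
    then show "Q \<in> qpV_M RG MG scale (ideal_times_module scale I)"
      using part6[OF Q assms(2)] by (simp add: qpV_M_def)
  next
    fix Q assume "Q \<in> qpV_M RG MG scale (ideal_times_module scale I)"
    then have Q: "Q \<in> qpSpec RG MG scale"
      and G: "Gr RG (colon scale (IM I)) \<subseteq> Gr RG (colon scale Q)"
      by (auto simp: qpV_M_def)
    have "I \<subseteq> Gr RG (colon scale Q)" using part6[OF Q assms(2)] G by blast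
    moreover have "colon scale Q \<in> qpSpec_Rbar RG scale" using part1[OF Q] .
    moreover have "Gr RG (colon scale Q) \<in> Spec_Rbar RG scale"
      using part2[OF part1[OF Q]] by (simp add: phi_R_def)
    ultimately show "Q \<in> qpSpec RG MG scale \<inter> psi_q scale -` qpV_Rbar RG scale I"
      using Q by (auto simp: qpV_Rbar_def V_Rbar_def phi_R_def psi_q_def)
  qed
  have p7: "graded_submodule MG scale (ideal_times_module scale I)"
    by (rule IM_graded[OF assms(2)])
  show ?thesis using p1 p2 p3 p4 p5 p6 p7 by blast
qed

end
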